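(* Let $X$ be a connected, locally connected Hausdorff topological space, $V$ a locally convex topological vector space, and $f:X\to V$ a continuous map that has local convexity data. If $f$ is open onto its image, then $f(X)$ is a locally convex subset of $V$. If, moreover, $f(X)$ is closed in some convex subset of $V$ (with the topology induced from $V$), then $f(X)$ is convex.
   Context: A subset $C\subset V$ is a cone with vertex $v_0$ if $v_0\in C$ and $(1-\lambda)v_0+\lambda v\in C$ for every $\lambda\ge 0$ and every $v\in C$, $v\ne v_0$; it is a convex cone if it is moreover convex. A continuous map $f:X\to V$ (with $X$ connected, locally connected, Hausdorff and $V$ a locally convex topological vector space) has local convexity data if for each $x\in X$ and every sufficiently small open neighborhood $U_x$ of $x$ there is a convex cone $C_x\subset V$ with vertex $f(x)$, endowed with the subspace topology from $V$, such that (VN) $f(U_x)\subset C_x$ and $f(U_x)$ is a neighborhood of $f(x)$ in $C_x$; and (SLO) $f|_{U_x}:U_x\to C_x$ is an open map, and for every neighborhood $U'_x\subset U_x$ of $x$ the set $f(U'_x)$ is a neighborhood of $f(x)$ in $C_x$. A subset $Y\subset V$ is locally convex if every $y\in Y$ has a neighborhood $N$ in $V$ with $N\cap Y$ convex. "Open onto its image" means $f:X\to f(X)$ is open when $f(X)$ carries the subspace topology. *)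

theory Defs
  imports "HOL-Analysis.Analysis"
begin

definition locally_convex_tvs :: "'b::{real_vector,topological_space} itself \<Rightarrow> bool" where
  "locally_convex_tvs (T :: 'b itself) \<longleftrightarrow>
     continuous_on UNIV (\<lambda>p::'b \<times> 'b. fst p + snd p) \<and>
     continuous_on UNIV (\<lambda>p::real \<times> 'b. fst p *\<^sub>R snd p) \<and>
     (\<forall>U (x::'b). open U \<and> x \<in> U \<longrightarrow> (\<exists>W. open W \<and> convex W \<and> x \<in> W \<and> W \<subseteq> U))"

definition cone_with_vertex :: "'b::real_vector set \<Rightarrow> 'b \<Rightarrow> bool" where
  "cone_with_vertex C v0 \<longleftrightarrow> v0 \<in> C \<and>
     (\<forall>t::real. t \<ge> 0 \<longrightarrow> (\<forall>v\<in>C. v \<noteq> v0 \<longrightarrow> (1 - t) *\<^sub>R v0 + t *\<^sub>R v \<in> C))"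

definition convex_cone_with_vertex :: "'b::real_vector set \<Rightarrow> 'b \<Rightarrow> bool" where
  "convex_cone_with_vertex C v0 \<longleftrightarrow> cone_with_vertex C v0 \<and> convex C"

definition nbhd_in :: "'b::topological_space set \<Rightarrow> 'b set \<Rightarrow> 'b \<Rightarrow> bool" where
  "nbhd_in S N y \<longleftrightarrow> N \<subseteq> S \<and> (\<exists>W. openin (top_of_set S) W \<and> y \<in> W \<and> W \<subseteq> N)"

definition local_convexity_data :: "('a::topological_space \<Rightarrow> 'b::{real_vector,topological_space}) \<Rightarrow> bool" where
  "local_convexity_data f \<longleftrightarrow>
    (\<forall>x. \<exists>N. open N \<and> x \<in> N \<and>
      (\<forall>U. open U \<and> x \<in> U \<and> U \<subseteq> N \<longrightarrow>
        (\<exists>C. convex_cone_with_vertex C (f x) \<and>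
           \<comment> \<open>(VN)\<close>
           f ` U \<subseteq> C \<and> nbhd_in C (f ` U) (f x) \<and>
           \<comment> \<open>(SLO)\<close>
           (\<forall>G. open G \<and> G \<subseteq> U \<longrightarrow> openin (top_of_set C) (f ` G)) \<and>
           (\<forall>U'. U' \<subseteq> U \<and> (\<exists>G. open G \<and> x \<in> G \<and> G \<subseteq> U') \<longrightarrow> nbhd_in C (f ` U') (f x)))))"

definition open_onto_image :: "('a::topological_space \<Rightarrow> 'b::topological_space) \<Rightarrow> bool" where
  "open_onto_image f \<longleftrightarrow> (\<forall>U. open U \<longrightarrow> openin (top_of_set (range f)) (f ` U))"

definition locally_convex_set :: "'b::{real_vector,topological_space} set \<Rightarrow> bool" where
  "locally_convex_set Y \<longleftrightarrow> (\<forall>y\<in>Y. \<exists>N. (\<exists>G. open G \<and> y \<in> G \<and> G \<subseteq> N) \<and> convex (N \<inter> Y))"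

end

theory Submission
  imports Defs
begin

lemma lc_add:
  assumes "locally_convex_tvs TYPE('b::{real_vector,topological_space})"
    and "continuous_on S g" "continuous_on S h"
  shows "continuous_on S (\<lambda>x. g x + h x :: 'b)"
proof -
  have c: "continuous_on UNIV (\<lambda>p::'b\<times>'b. fst p + snd p)"
    using assms(1) unfolding locally_convex_tvs_def by blast
  show ?thesis
    using continuous_on_compose2[OF c continuous_on_Pair[OF assms(2,3)]] by simp
qed

lemma lc_scale:
  assumes "locally_convex_tvs TYPE('b::{real_vector,topological_space})"
    and "continuous_on S a" "continuous_on S g"
  shows "continuous_on S (\<lambda>x. a x *\<^sub>R (g x :: 'b))"
proof -
  have c: "continuous_on UNIV (\<lambda>p::real\<times>'b. fst p *\<^sub>R snd p)"
    using assms(1) unfolding locally_convex_tvs_def by blast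
  show ?thesis
    using continuous_on_compose2[OF c continuous_on_Pair[OF assms(2,3)]] by simp
qed

lemma small_step:
  assumes "locally_convex_tvs TYPE('b::{real_vector,topological_space})"
    and "open U" "(m::'b) \<in> U"
  shows "\<exists>r>0. \<forall>s. \<bar>s\<bar> < r \<longrightarrow> m + s *\<^sub>R k \<in> U"
proof -
  have "continuous_on UNIV (\<lambda>s::real. m + s *\<^sub>R k)"
    by (intro lc_add[OF assms(1)] lc_scale[OF assms(1)] continuous_on_const continuous_on_id)
  then have o: "open ((\<lambda>s::real. m + s *\<^sub>R k) -` U)"
    using assms(2) continuous_on_open_vimage[of UNIV "\<lambda>s::real. m + s *\<^sub>R k"] by simp
  have "0 \<in> (\<lambda>s::real. m + s *\<^sub>R k) -` U" using assms(3) by simp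
  then obtain r where "r > 0" "ball 0 r \<subseteq> (\<lambda>s::real. m + s *\<^sub>R k) -` U"
    using open_contains_ball_eq[OF o] by blast
  then have "\<forall>s. \<bar>s\<bar> < r \<longrightarrow> m + s *\<^sub>R k \<in> U"
    by (auto simp: subset_eq dist_real_def)
  then show ?thesis using \<open>r > 0\<close> by blast
qed

lemma cone_scale:
  assumes "convex_cone_with_vertex C v" "v + u \<in> C" "0 \<le> s"
  shows "v + s *\<^sub>R u \<in> C"
proof (cases "u = 0")
  case True
  then show ?thesis using assms unfolding convex_cone_with_vertex_def cone_with_vertex_def by simp
next
  case False
  then have "(1 - s) *\<^sub>R v + s *\<^sub>R (v + u) \<in> C"
    using assms unfolding convex_cone_with_vertex_def cone_with_vertex_def by auto
  moreover have "(1 - s) *\<^sub>R v + s *\<^sub>R (v + u) = v + s *\<^sub>R u"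
    by (simp add: algebra_simps)
  ultimately show ?thesis by simp
qed

lemma cone_add:
  assumes "convex_cone_with_vertex C v" "v + u \<in> C" "v + u' \<in> C"
  shows "v + (u + u') \<in> C"
proof -
  have "(1/2) *\<^sub>R (v + u) + (1/2) *\<^sub>R (v + u') \<in> C"
    using assms unfolding convex_cone_with_vertex_def by (intro convexD) auto
  moreover have "(1/2::real) *\<^sub>R (v + u) + (1/2) *\<^sub>R (v + u') = v + (1/2::real) *\<^sub>R (u + u')"
  proof -
    have h: "(1/2::real) *\<^sub>R v + (1/2::real) *\<^sub>R v = v"
      by (simp flip: scaleR_add_left)
    show ?thesis by (simp add: scaleR_add_right h algebra_simps)
  qed
  ultimately have "v + (1/2::real) *\<^sub>R (u + u') \<in> C" by simp
  from cone_scale[OF assms(1) this, of 2] show ?thesis by simp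
qed

lemma cone_vertex: "convex_cone_with_vertex C v \<Longrightarrow> v \<in> C"
  unfolding convex_cone_with_vertex_def cone_with_vertex_def by simp

lemma transfer_dummy: "True" by simp

lemma transfer:
  assumes lc: "locally_convex_tvs TYPE('b::{real_vector,topological_space})"
    and Ca: "convex_cone_with_vertex Ca a" and Cv: "convex_cone_with_vertex Cv v"
    and "open Oa" "open Ov" and Ya: "Oa \<inter> Y = Oa \<inter> Ca" and Yv: "Ov \<inter> Y = Ov \<inter> Cv"
    and ep: "a + e \<in> Ca" and em: "a + (- e) \<in> Ca"
    and m: "m \<in> Oa" "m \<in> Ov" "m \<in> Y" and meq: "m = a + c *\<^sub>R e"
    and k: "v + k \<in> Cv"
  shows "a + (k::'b) \<in> Ca"
proof -
  obtain r where r: "r > 0" "\<forall>s. \<bar>s\<bar> < r \<longrightarrow> m + s *\<^sub>R k \<in> Oa \<inter> Ov"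
    using small_step[OF lc _ , of "Oa \<inter> Ov" m k] m \<open>open Oa\<close> \<open>open Ov\<close> by blast
  define s where "s = r/2"
  have s: "s > 0" "m + s *\<^sub>R k \<in> Oa \<inter> Ov" using r by (auto simp: s_def)
  have "m \<in> Cv" using m Yv by blast
  then have "v + (m - v) \<in> Cv" by simp
  moreover have "v + s *\<^sub>R k \<in> Cv" using cone_scale[OF Cv k] s by simp
  ultimately have "v + ((m - v) + s *\<^sub>R k) \<in> Cv"
    using cone_add[OF Cv] by blast
  then have "m + s *\<^sub>R k \<in> Cv" by (simp add: algebra_simps)
  then have "m + s *\<^sub>R k \<in> Y" using s Yv by blast
  then have "m + s *\<^sub>R k \<in> Ca" using s Ya by blast
  then have 1: "a + (c *\<^sub>R e + s *\<^sub>R k) \<in> Ca" using meq by (simp add: algebra_simps)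
  have 2: "a + (- c) *\<^sub>R e \<in> Ca"
  proof (cases "c \<le> 0")
    case True then show ?thesis using cone_scale[OF Ca ep, of "-c"] by simp
  next
    case False then show ?thesis using cone_scale[OF Ca em, of "c"] by simp
  qed
  have "a + ((c *\<^sub>R e + s *\<^sub>R k) + (- c) *\<^sub>R e) \<in> Ca" using cone_add[OF Ca 1 2] .
  then have "a + s *\<^sub>R k \<in> Ca" by (simp add: algebra_simps)
  from cone_scale[OF Ca this, of "1/s"] s have "a + (1/s) *\<^sub>R (s *\<^sub>R k) \<in> Ca" by simp
  moreover have "(1/s) *\<^sub>R (s *\<^sub>R k) = k" using s by simp
  ultimately show ?thesis by simp
qed

lemma local_cone:
  fixes f :: "'a::topological_space \<Rightarrow> 'b::{real_vector,topological_space}"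
  assumes lc: "locally_convex_tvs TYPE('b)"
    and d: "local_convexity_data f" and oo: "open_onto_image f"
  shows "\<exists>C Q. convex_cone_with_vertex C (f x) \<and> open Q \<and> convex Q \<and> f x \<in> Q \<and>
     Q \<inter> range f = Q \<inter> C"
proof -
  let ?P = "\<lambda>N. open N \<and> x \<in> N \<and>
      (\<forall>U. open U \<and> x \<in> U \<and> U \<subseteq> N \<longrightarrow>
        (\<exists>C. convex_cone_with_vertex C (f x) \<and> f ` U \<subseteq> C \<and> nbhd_in C (f ` U) (f x) \<and>
           (\<forall>G. open G \<and> G \<subseteq> U \<longrightarrow> openin (top_of_set C) (f ` G)) \<and>
           (\<forall>U'. U' \<subseteq> U \<and> (\<exists>G. open G \<and> x \<in> G \<and> G \<subseteq> U') \<longrightarrow> nbhd_in C (f ` U') (f x))))"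
  have "\<exists>N. ?P N" using d unfolding local_convexity_data_def by (rule spec)
  then obtain N where PN: "?P N" by (rule exE)
  have N: "open N" "x \<in> N" using conjunct1[OF PN] conjunct1[OF conjunct2[OF PN]] by auto
  have "\<exists>C. convex_cone_with_vertex C (f x) \<and> f ` N \<subseteq> C \<and> nbhd_in C (f ` N) (f x) \<and>
           (\<forall>G. open G \<and> G \<subseteq> N \<longrightarrow> openin (top_of_set C) (f ` G)) \<and>
           (\<forall>U'. U' \<subseteq> N \<and> (\<exists>G. open G \<and> x \<in> G \<and> G \<subseteq> U') \<longrightarrow> nbhd_in C (f ` U') (f x))"
    using PN[THEN conjunct2, THEN conjunct2, THEN spec[of _ N]] N by simp
  then obtain C where C: "convex_cone_with_vertex C (f x)" "f ` N \<subseteq> C" "nbhd_in C (f ` N) (f x)"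
    by (elim exE conjE) (rule that; assumption)
  obtain W where W: "openin (top_of_set C) W" "f x \<in> W" "W \<subseteq> f ` N"
    using C(3) unfolding nbhd_in_def by blast
  obtain T where T: "open T" "W = C \<inter> T" using W(1) by (auto simp: openin_open)
  have "openin (top_of_set (range f)) (f ` N)" using oo N unfolding open_onto_image_def by blast
  then obtain P where P: "open P" "f ` N = range f \<inter> P" by (auto simp: openin_open)
  have "open (T \<inter> P)" "f x \<in> T \<inter> P" using T P W N by auto
  then obtain Q where O: "open Q" "convex Q" "f x \<in> Q" "Q \<subseteq> T \<inter> P"
    using lc unfolding locally_convex_tvs_def by blast
  have "Q \<inter> range f = Q \<inter> C"
  proof
    show "Q \<inter> range f \<subseteq> Q \<inter> C" using O P C(2) by blast
    show "Q \<inter> C \<subseteq> Q \<inter> range f" using O T W by blast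
  qed
  then show ?thesis using C O by blast
qed

lemma seg_closed:
  fixes Y K :: "'b::{real_vector,topological_space} set"
  assumes lc: "locally_convex_tvs TYPE('b)"
    and K: "convex K" "Y \<subseteq> K" "closedin (top_of_set K) Y" and p: "p \<in> Y"
  shows "closedin (top_of_set Y) {y\<in>Y. \<forall>t\<in>{0..1}. (1-t) *\<^sub>R p + t *\<^sub>R y \<in> Y}"
proof -
  have eq: "{y\<in>Y. \<forall>t\<in>{0..1}. (1-t) *\<^sub>R p + t *\<^sub>R y \<in> Y} =
     Y \<inter> (\<Inter>t\<in>{0..1::real}. K \<inter> (\<lambda>y. (1-t) *\<^sub>R p + t *\<^sub>R y) -` Y)"
    using K(2) by blast
  have "closedin (top_of_set K) (K \<inter> (\<lambda>y. (1-t) *\<^sub>R p + t *\<^sub>R y) -` Y)" if t: "t \<in> {0..1::real}" for t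
  proof (rule continuous_closedin_preimage_gen[OF _ _ K(3)])
    show "continuous_on K (\<lambda>y. (1 - t) *\<^sub>R p + t *\<^sub>R y)"
      by (intro lc_add[OF lc] lc_scale[OF lc] continuous_on_const continuous_on_id)
    show "(\<lambda>y. (1 - t) *\<^sub>R p + t *\<^sub>R y) \<in> K \<rightarrow> K"
      using t p K(1,2) by (auto intro!: convexD_alt)
  qed
  then have "closedin (top_of_set K) (\<Inter>t\<in>{0..1::real}. K \<inter> (\<lambda>y. (1-t) *\<^sub>R p + t *\<^sub>R y) -` Y)"
    by (intro closedin_INT) auto
  then have "closedin (top_of_set K) {y\<in>Y. \<forall>t\<in>{0..1}. (1-t) *\<^sub>R p + t *\<^sub>R y \<in> Y}"
    unfolding eq using K(3) by blast
  then show ?thesis by (rule closedin_subset_trans) (use K in auto)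
qed

lemma seg_open:
  fixes Y :: "'b::{real_vector,topological_space} set" and Cf Of :: "'b \<Rightarrow> 'b set"
  assumes lc: "locally_convex_tvs TYPE('b)"
    and HC: "\<And>v. v \<in> Y \<Longrightarrow> convex_cone_with_vertex (Cf v) v \<and> open (Of v) \<and> convex (Of v) \<and>
                 v \<in> Of v \<and> Of v \<inter> Y = Of v \<inter> Cf v"
    and p: "p \<in> Y" and y: "y \<in> Y" and seg: "\<forall>t\<in>{0..1}. (1-t) *\<^sub>R p + t *\<^sub>R y \<in> Y"
  shows "\<exists>N. open N \<and> y \<in> N \<and> (\<forall>z\<in>N\<inter>Y. \<forall>t\<in>{0..1}. (1-t) *\<^sub>R p + t *\<^sub>R z \<in> Y)"
proof -
  define e where "e = y - p"
  define w where "w t = p + t *\<^sub>R e" for t::real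
  have weq: "(1-t) *\<^sub>R p + t *\<^sub>R y = w t" for t
    by (simp add: w_def e_def algebra_simps)
  have wY: "w t \<in> Y" if "t \<in> {0..1}" for t using seg that weq by metis
  have w1: "w 1 = y" by (simp add: w_def e_def)
  have wshift: "w s = w t + (s - t) *\<^sub>R e" for s t by (simp add: w_def algebra_simps)
  have HCw: "convex_cone_with_vertex (Cf (w t)) (w t) \<and> open (Of (w t)) \<and> convex (Of (w t)) \<and>
       w t \<in> Of (w t) \<and> Of (w t) \<inter> Y = Of (w t) \<inter> Cf (w t)" if "t \<in> {0..1}" for t
    using HC wY that by blast
  have step1: "w t + e \<in> Cf (w t) \<and> w t + (- e) \<in> Cf (w t)" if t: "t \<in> {0<..<1}" for t
  proof -
    have H: "convex_cone_with_vertex (Cf (w t)) (w t)" "open (Of (w t))" "w t \<in> Of (w t)"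
       "Of (w t) \<inter> Y = Of (w t) \<inter> Cf (w t)" using HCw t by auto
    obtain r where r: "r > 0" "\<forall>s. \<bar>s\<bar> < r \<longrightarrow> w t + s *\<^sub>R e \<in> Of (w t)"
      using small_step[OF lc H(2,3)] by blast
    define s where "s = min (r/2) (min t (1-t))"
    have s: "s > 0" "s < r" "t + s \<le> 1" "0 \<le> t - s" using r t by (auto simp: s_def)
    have "w t + s *\<^sub>R e = w (t+s)" "w t + (-s) *\<^sub>R e = w (t-s)" using wshift[of "t+s" t] wshift[of "t-s" t] by simp_all
    then have "w t + s *\<^sub>R e \<in> Y" "w t + (-s) *\<^sub>R e \<in> Y" using wY s by auto
    moreover have "w t + s *\<^sub>R e \<in> Of (w t)" "w t + (-s) *\<^sub>R e \<in> Of (w t)"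
      using r(2)[rule_format, of s] r(2)[rule_format, of "-s"] s by auto
    ultimately have "w t + s *\<^sub>R e \<in> Cf (w t)" "w t + (-s) *\<^sub>R e \<in> Cf (w t)" using H(4) by blast+
    from cone_scale[OF H(1) this(1), of "1/s"] cone_scale[OF H(1) this(2), of "1/s"] s
    show ?thesis by simp
  qed
  define Kf where "Kf t = {k. w t + k \<in> Cf (w t)}" for t
  have loc: "eventually (\<lambda>b. Kf a = Kf b) (at a within {0<..<1})" if a: "a \<in> {0<..<1}" for a
  proof -
    have Ha: "convex_cone_with_vertex (Cf (w a)) (w a)" "open (Of (w a))" "w a \<in> Of (w a)"
       "Of (w a) \<inter> Y = Of (w a) \<inter> Cf (w a)" using HCw a by auto
    obtain r where r: "r > 0" "\<forall>s. \<bar>s\<bar> < r \<longrightarrow> w a + s *\<^sub>R e \<in> Of (w a)"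
      using small_step[OF lc Ha(2,3)] by blast
    have "Kf a = Kf s" if s: "s \<in> {0<..<1}" "dist s a < r" for s
    proof -
      have Hs: "convex_cone_with_vertex (Cf (w s)) (w s)" "open (Of (w s))" "w s \<in> Of (w s)"
        "Of (w s) \<inter> Y = Of (w s) \<inter> Cf (w s)" using HCw s by auto
      have ws: "w s \<in> Of (w a)" using r s wshift[of s a] by (auto simp: dist_real_def)
      have wsY: "w s \<in> Y" using wY s by auto
      show ?thesis
      proof (intro set_eqI iffI)
        fix k assume "k \<in> Kf a"
        then have "w a + k \<in> Cf (w a)" by (simp add: Kf_def)
        from transfer[OF lc Hs(1) Ha(1) Hs(2) Ha(2) Hs(4) Ha(4) _ _ Hs(3) ws wsY _ this, of e 0]
          step1[OF s(1)]
        show "k \<in> Kf s" by (simp add: Kf_def)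
      next
        fix k assume "k \<in> Kf s"
        then have "w s + k \<in> Cf (w s)" by (simp add: Kf_def)
        from transfer[OF lc Ha(1) Hs(1) Ha(2) Hs(2) Ha(4) Hs(4) _ _ ws Hs(3) wsY wshift[of s a] this]
          step1[OF a]
        show "k \<in> Kf a" by (simp add: Kf_def)
      qed
    qed
    then show ?thesis unfolding eventually_at using r by blast
  qed
  have Kconst: "Kf a = Kf b" if "a \<in> {0<..<1}" "b \<in> {0<..<1}" for a b
    by (rule connected_local_const[OF connected_Ioo that]) (use loc in blast)
  have Hy: "convex_cone_with_vertex (Cf y) y" "open (Of y)" "y \<in> Of y"
       "Of y \<inter> Y = Of y \<inter> Cf y" "convex (Of y)" using HC y by auto
  obtain r where r: "r > 0" "\<forall>s. \<bar>s\<bar> < r \<longrightarrow> y + s *\<^sub>R e \<in> Of y"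
    using small_step[OF lc Hy(2,3)] by blast
  define s where "s = min (r/2) (1/2)"
  have s: "s > 0" "s < r" "s \<le> 1/2" using r by (auto simp: s_def)
  have wts: "w (1 - s) = y + (-s) *\<^sub>R e" using wshift[of "1-s" 1] w1 by simp
  have wtsO: "w (1 - s) \<in> Of y" using wts r(2)[rule_format, of "-s"] s by auto
  have wtsY: "w (1 - s) \<in> Y" using wY s by auto
  have "w (1-s) \<in> Of y \<inter> Y" using wtsO wtsY by simp
  then have "w (1-s) \<in> Cf y" unfolding Hy(4) by simp
  then have ys: "y + (-s) *\<^sub>R e \<in> Cf y" unfolding wts .
  have "y + (1/s) *\<^sub>R ((-s) *\<^sub>R e) \<in> Cf y"
    by (rule cone_scale[OF Hy(1) ys]) (use s in simp)
  moreover have "(1/s) *\<^sub>R ((-s) *\<^sub>R e) = -e" using s by simp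
  ultimately have em1: "y + (-e) \<in> Cf y" by simp
  have t0: "1 - s \<in> {0<..<1}" using s by simp
  have Ht0: "convex_cone_with_vertex (Cf (w (1-s))) (w (1-s))" "open (Of (w (1-s)))"
     "w (1-s) \<in> Of (w (1-s))" "Of (w (1-s)) \<inter> Y = Of (w (1-s)) \<inter> Cf (w (1-s))"
    using HCw t0 by auto
  have step3: "w t + k \<in> Cf (w t)" if t: "t \<in> {0<..<1}" and k: "y + k \<in> Cf y" for t k
  proof -
    have "w (1-s) + k \<in> Cf (w (1-s))"
      using transfer[OF lc Ht0(1) Hy(1) Ht0(2) Hy(2) Ht0(4) Hy(4) _ _ Ht0(3) wtsO wtsY _ k, of e 0]
        step1[OF t0] by simp
    then have "k \<in> Kf (1-s)" by (simp add: Kf_def)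
    then have "k \<in> Kf t" using Kconst[OF t0 t] by simp
    then show ?thesis by (simp add: Kf_def)
  qed
  define \<Phi> where "\<Phi> q = (1 - snd q) *\<^sub>R p + snd q *\<^sub>R fst q" for q :: "'b \<times> real"
  have contP: "continuous_on UNIV \<Phi>"
    unfolding \<Phi>_def by (intro lc_add[OF lc] lc_scale[OF lc] continuous_intros)
  have openP: "open (\<Phi> -` U)" if "open U" for U
    using contP that continuous_on_open_vimage[of UNIV \<Phi>] by auto
  have Hp: "convex_cone_with_vertex (Cf p) p" "open (Of p)" "p \<in> Of p"
       "Of p \<inter> Y = Of p \<inter> Cf p" "convex (Of p)" using HC p by auto
  have yin: "(y, 0) \<in> \<Phi> -` Of p" using Hp by (simp add: \<Phi>_def)
  obtain A B where AB: "open A" "open B" "(y,0) \<in> A \<times> B" "A \<times> B \<subseteq> \<Phi> -` Of p"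
    by (rule open_prod_elim[OF openP[OF Hp(2)] yin])
  have "(0::real) \<in> B" using AB(3) by simp
  then have "\<exists>\<epsilon>>0. ball 0 \<epsilon> \<subseteq> B" using open_contains_ball_eq[OF AB(2)] by simp
  then obtain \<beta> where \<beta>: "\<beta> > 0" "ball 0 \<beta> \<subseteq> B" by blast
  define b where "b = min \<beta> 1 / 2"
  have b: "0 < b" "b \<le> 1/2" "b < \<beta>" using \<beta> by (auto simp: b_def)
  define W where "W = (\<Union>l\<in>{0<..1}. \<Phi> -` Of (w l))"
  have oW: "open W" unfolding W_def using HCw openP by (intro open_UN) auto
  have sW: "{y} \<times> {b..1} \<subseteq> W"
  proof clarify
    fix l assume l: "l \<in> {b..1}"
    then have "\<Phi> (y, l) = w l" using weq by (simp add: \<Phi>_def)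
    then show "(y, l) \<in> W" unfolding W_def using l b HCw[of l] by auto
  qed
  have "\<exists>X0. y \<in> X0 \<and> open X0 \<and> X0 \<times> {b..1} \<subseteq> W"
    by (rule Elementary_Topology.tube_lemma[OF compact_Icc oW sW])
  then obtain N1 where N1: "y \<in> N1" "open N1" "N1 \<times> {b..1} \<subseteq> W" by blast
  define N where "N = A \<inter> N1 \<inter> Of y"
  have "open N" unfolding N_def by (intro open_Int N1(2) AB(1) Hy(2))
  moreover have "y \<in> N" unfolding N_def using N1(1) AB(3) Hy(3) by simp
  moreover have "\<forall>z\<in>N\<inter>Y. \<forall>t\<in>{0..1}. (1-t) *\<^sub>R p + t *\<^sub>R z \<in> Y"
  proof (intro ballI)
    fix z t assume z: "z \<in> N \<inter> Y" and t: "t \<in> {0..1::real}"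
    have "z \<in> Cf y" using z Hy(4) by (auto simp: N_def)
    then have zC: "y + (z - y) \<in> Cf y" by simp
    have big: "\<Phi> (z, t) \<in> Y" if t: "t \<in> {b..1}" for t
    proof -
      have "(z, t) \<in> W" using N1 z t by (auto simp: N_def)
      then obtain l where l: "l \<in> {0<..1}" "\<Phi> (z, t) \<in> Of (w l)" unfolding W_def by auto
      show ?thesis
      proof (cases "l = 1")
        case True
        have "y + ((1-t) *\<^sub>R (-e) + t *\<^sub>R (z - y)) \<in> Cf y"
          using cone_add[OF Hy(1) cone_scale[OF Hy(1) em1] cone_scale[OF Hy(1) zC]] t b by simp
        moreover have "y + ((1-t) *\<^sub>R (-e) + t *\<^sub>R (z - y)) = \<Phi> (z, t)"
          by (simp add: \<Phi>_def e_def algebra_simps)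
        ultimately show ?thesis using l True w1 Hy(4) by auto
      next
        case False
        then have l': "l \<in> {0<..<1}" using l by auto
        have Hl: "convex_cone_with_vertex (Cf (w l)) (w l)" 
           "Of (w l) \<inter> Y = Of (w l) \<inter> Cf (w l)" using HCw l by auto
        have 1: "w l + (t - l) *\<^sub>R e \<in> Cf (w l)"
        proof (cases "t \<ge> l")
          case True then show ?thesis using cone_scale[OF Hl(1), of e "t - l"] step1[OF l'] by simp
        next
          case False then show ?thesis
            using cone_scale[OF Hl(1), of "-e" "l - t"] step1[OF l'] by (simp add: algebra_simps)
        qed
        have 2: "w l + t *\<^sub>R (z - y) \<in> Cf (w l)"
          using cone_scale[OF Hl(1) step3[OF l' zC]] t b by simp
        have "w l + ((t - l) *\<^sub>R e + t *\<^sub>R (z - y)) \<in> Cf (w l)" using cone_add[OF Hl(1) 1 2] .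
        moreover have "w l + ((t - l) *\<^sub>R e + t *\<^sub>R (z - y)) = \<Phi> (z, t)"
          by (simp add: \<Phi>_def e_def w_def algebra_simps)
        ultimately show ?thesis using l Hl(2) by auto
      qed
    qed
    show "(1-t) *\<^sub>R p + t *\<^sub>R z \<in> Y"
    proof (cases "t \<ge> b")
      case True then show ?thesis using big[of t] t by (simp add: \<Phi>_def)
    next
      case False
      have bY: "\<Phi> (z, b) \<in> Y" using big b by auto
      have "b \<in> ball 0 \<beta>" using b by simp
      then have "b \<in> B" using \<beta>(2) by blast
      moreover have "z \<in> A" using z by (simp add: N_def)
      ultimately have "(z, b) \<in> A \<times> B" by simp
      then have bO: "\<Phi> (z, b) \<in> Of p" using AB by auto
      have "convex (Cf p)" using Hp(1) unfolding convex_cone_with_vertex_def by simp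
      then have "convex (Of p \<inter> Cf p)" using Hp(5) by (rule convex_Int[rotated])
      then have cvx: "convex (Of p \<inter> Y)" using Hp(4) by simp
      define \<mu> where "\<mu> = t / b"
      have tb: "0 \<le> t" "t < b" using t False by auto
      have \<mu>1: "0 \<le> \<mu>" unfolding \<mu>_def using tb b(1) by simp
      have \<mu>2: "\<mu> \<le> 1" unfolding \<mu>_def using tb b(1) by (simp add: divide_le_eq_1)
      have \<mu>3: "\<mu> * b = t" unfolding \<mu>_def using b(1) by simp
      note \<mu> = \<mu>1 \<mu>2 \<mu>3
      have "(1 - \<mu>) *\<^sub>R p + \<mu> *\<^sub>R \<Phi> (z, b) \<in> Of p \<inter> Y"
        using convexD_alt[OF cvx _ _ \<mu>(1,2), of p "\<Phi> (z, b)"] Hp p bY bO by auto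
      moreover have "(1 - \<mu>) *\<^sub>R p + \<mu> *\<^sub>R \<Phi> (z, b) = (1 - \<mu> * b) *\<^sub>R p + (\<mu> * b) *\<^sub>R z"
        by (simp add: \<Phi>_def algebra_simps)
      ultimately have "(1 - \<mu> * b) *\<^sub>R p + (\<mu> * b) *\<^sub>R z \<in> Y" by simp
      then show ?thesis unfolding \<mu>3 .
    qed
  qed
  ultimately show ?thesis by blast
qed

lemma tietze_cone:
  fixes Y K :: "'b::{real_vector,topological_space} set"
  assumes lc: "locally_convex_tvs TYPE('b)"
    and loc: "\<forall>y\<in>Y. \<exists>C Q. convex_cone_with_vertex C y \<and> open Q \<and> convex Q \<and> y \<in> Q \<and> Q \<inter> Y = Q \<inter> C"
    and conn: "connected Y" and K: "convex K" "Y \<subseteq> K" "closedin (top_of_set K) Y"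
  shows "convex Y"
proof -
  from loc have "\<exists>Cf. \<forall>y\<in>Y. \<exists>Q. convex_cone_with_vertex (Cf y) y \<and> open Q \<and> convex Q \<and> y \<in> Q \<and> Q \<inter> Y = Q \<inter> Cf y"
    by (rule bchoice)
  then obtain Cf where "\<forall>y\<in>Y. \<exists>Q. convex_cone_with_vertex (Cf y) y \<and> open Q \<and> convex Q \<and> y \<in> Q \<and> Q \<inter> Y = Q \<inter> Cf y"
    by (rule exE)
  then have "\<exists>Of. \<forall>y\<in>Y. convex_cone_with_vertex (Cf y) y \<and> open (Of y) \<and> convex (Of y) \<and> y \<in> Of y \<and> Of y \<inter> Y = Of y \<inter> Cf y"
    by (rule bchoice)
  then obtain Of where Of: "\<forall>y\<in>Y. convex_cone_with_vertex (Cf y) y \<and> open (Of y) \<and> convex (Of y) \<and> y \<in> Of y \<and> Of y \<inter> Y = Of y \<inter> Cf y"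
    by (rule exE)
  have HC: "\<And>v. v \<in> Y \<Longrightarrow> convex_cone_with_vertex (Cf v) v \<and> open (Of v) \<and> convex (Of v) \<and>
                 v \<in> Of v \<and> Of v \<inter> Y = Of v \<inter> Cf v"
    using Of by (rule bspec)
  have S: "{y\<in>Y. \<forall>t\<in>{0..1}. (1-t) *\<^sub>R p + t *\<^sub>R y \<in> Y} = Y" if p: "p \<in> Y" for p
  proof -
    let ?S = "{y\<in>Y. \<forall>t\<in>{0..1}. (1-t) *\<^sub>R p + t *\<^sub>R y \<in> Y}"
    have cl: "closedin (top_of_set Y) ?S" by (rule seg_closed[OF lc K(1) K(2) K(3) p])
    have op: "openin (top_of_set Y) ?S"
      unfolding openin_subopen[of _ ?S]
    proof (intro ballI)
      fix y assume y: "y \<in> ?S"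
      then have yY: "y \<in> Y" and sg: "\<forall>t\<in>{0..1}. (1-t) *\<^sub>R p + t *\<^sub>R y \<in> Y" by auto
      have "\<exists>N. open N \<and> y \<in> N \<and> (\<forall>z\<in>N\<inter>Y. \<forall>t\<in>{0..1}. (1-t) *\<^sub>R p + t *\<^sub>R z \<in> Y)"
        by (rule seg_open[OF lc HC p yY sg])
      then obtain N where N: "open N" "y \<in> N" "\<forall>z\<in>N\<inter>Y. \<forall>t\<in>{0..1}. (1-t) *\<^sub>R p + t *\<^sub>R z \<in> Y"
        by (elim exE conjE) (rule that)
      have "openin (top_of_set Y) (Y \<inter> N)" using N(1) by (rule openin_open_Int)
      moreover have "y \<in> Y \<inter> N" using yY N(2) by simp
      moreover have "Y \<inter> N \<subseteq> ?S" using N(3) by blast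
      ultimately show "\<exists>T. openin (top_of_set Y) T \<and> y \<in> T \<and> T \<subseteq> ?S" by blast
    qed
    have "(1-t) *\<^sub>R p + t *\<^sub>R p = p" for t :: real by (simp add: algebra_simps)
    then have "p \<in> ?S" using p by simp
    then have "?S \<noteq> {}" by blast
    moreover have "?S = {} \<or> ?S = Y" using conn op cl unfolding connected_clopen by (elim allE impE) (rule conjI)
    ultimately show ?thesis by blast
  qed
  show ?thesis unfolding convex_alt
  proof (intro ballI allI impI)
    fix x y and u :: real assume x: "x \<in> Y" and y: "y \<in> Y" and u: "0 \<le> u \<and> u \<le> 1"
    have "y \<in> {y\<in>Y. \<forall>t\<in>{0..1}. (1-t) *\<^sub>R x + t *\<^sub>R y \<in> Y}" using S[OF x] y by simp
    then show "(1 - u) *\<^sub>R x + u *\<^sub>R y \<in> Y" using u by simp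
  qed
qed

theorem theorem2p12:
  fixes f :: "'a::t2_space \<Rightarrow> 'b::{real_vector,topological_space}"
  assumes "locally_convex_tvs TYPE('b)"
    and "connected (UNIV :: 'a set)"
    and "locally connected (UNIV :: 'a set)"
    and "continuous_on UNIV f"
    and "local_convexity_data f"
    and "open_onto_image f"
  shows "locally_convex_set (range f) \<and>
         (\<forall>K. convex K \<and> range f \<subseteq> K \<and> closedin (top_of_set K) (range f) \<longrightarrow> convex (range f))"
proof -
  have loc: "\<forall>y\<in>range f. \<exists>C Q. convex_cone_with_vertex C y \<and> open Q \<and> convex Q \<and> y \<in> Q \<and>
      Q \<inter> range f = Q \<inter> C"
  proof
    fix y assume "y \<in> range f"
    then obtain x where "y = f x" by blast
    then show "\<exists>C Q. convex_cone_with_vertex C y \<and> open Q \<and> convex Q \<and> y \<in> Q \<and>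
      Q \<inter> range f = Q \<inter> C" using local_cone[OF assms(1) assms(5) assms(6), of x] by simp
  qed
  have part1: "locally_convex_set (range f)"
    unfolding locally_convex_set_def
  proof
    fix y assume "y \<in> range f"
    then have "\<exists>C Q. convex_cone_with_vertex C y \<and> open Q \<and> convex Q \<and> y \<in> Q \<and>
      Q \<inter> range f = Q \<inter> C" by (rule bspec[OF loc])
    then obtain C Q where CQ: "convex_cone_with_vertex C y" "open Q" "convex Q" "y \<in> Q"
      "Q \<inter> range f = Q \<inter> C" by (elim exE conjE) (rule that)
    have "convex C" using CQ(1) unfolding convex_cone_with_vertex_def by simp
    then have "convex (Q \<inter> range f)" unfolding CQ(5) using CQ(3) by (intro convex_Int)
    then show "\<exists>N. (\<exists>G. open G \<and> y \<in> G \<and> G \<subseteq> N) \<and> convex (N \<inter> range f)"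
    proof (intro exI conjI)
      show "open Q" "y \<in> Q" "Q \<subseteq> Q" by (simp_all add: CQ(2,4))
    qed
  qed
  have conn: "connected (range f)"
    using connected_continuous_image[OF assms(4) assms(2)] .
  show ?thesis
  proof (intro conjI part1 allI impI)
    fix K assume "convex K \<and> range f \<subseteq> K \<and> closedin (top_of_set K) (range f)"
    then show "convex (range f)"
      by (elim conjE) (rule tietze_cone[OF assms(1) loc conn])
  qed
qed


end
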